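(* Let $t=\lceil\frac{n-\kappa}{2}\rceil$ and $\mathrm{Small}(x)=\mathrm{Small}_t(x)$. Let $u\ne v$ be vertices with $\kappa(u,v)=\kappa$. If $\{u,v\}\notin E$, then $u$ and $v$ are disconnected by $\mathrm{Small}(u)$ or by $\mathrm{Small}(v)$ (in particular at least one of them exists). If $\{u,v\}\in E$, then either $\mathrm{Small}(u)$ exists, $v\in\mathrm{Small}(u)$, and deleting the vertex set $\mathrm{Small}(u)\setminus\{v\}$ together with the edge $\{u,v\}$ disconnects $u$ from $v$; or the same holds with the roles of $u$ and $v$ exchanged.
   Context: $G=(V,E)$ is a finite, simple, connected, undirected, non-complete graph with $n=|V|$; $\kappa$ is its vertex connectivity, assumed $\kappa<n/4$. A cut is a set $U\subset V$ whose removal disconnects $G$; a $\kappa$-cut is a cut of size $\kappa$; a side of $U$ is a connected component of the subgraph induced on $V\setminus U$; $\mathrm{Side}_U(x)$ is the side containing $x\notin U$; a set disconnects two vertices if they lie in different sides of it. For vertices $u\neq v$, $\kappa(u,v)$ is the maximum number of internally vertex-disjoint $u$–$v$ paths, equivalently the minimum size of a set consisting of vertices other than $u,v$ and possibly the edge $\{u,v\}$ whose removal disconnects $u$ from $v$. For a vertex $x$ and $t\le\lceil\frac{n-\kappa}{2}\rceil$, $\mathrm{Small}_t(x)$ denotes, when it exists, the unique $\kappa$-cut $Y$ with $x\notin Y$, $|\mathrm{Side}_Y(x)|\le t$, and $\mathrm{Side}_Y(x)\subseteq\mathrm{Side}_U(x)$ for every $\kappa$-cut $U$ with $x\notin U$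 and $|\mathrm{Side}_U(x)|\le t$ (it exists iff some $\kappa$-cut $U$ with $x\notin U$ has $|\mathrm{Side}_U(x)|\le t$). *)

theory Defs
  imports Main
begin

definition simple_graph :: "'a set \<Rightarrow> 'a set set \<Rightarrow> bool" where
  "simple_graph V E \<longleftrightarrow> finite V \<and> (\<forall>e\<in>E. \<exists>x y. e = {x, y} \<and> x \<noteq> y \<and> x \<in> V \<and> y \<in> V)"

definition adj_in :: "'a set set \<Rightarrow> 'a set \<Rightarrow> 'a \<Rightarrow> 'a \<Rightarrow> bool" where
  "adj_in E S x y \<longleftrightarrow> x \<in> S \<and> y \<in> S \<and> {x, y} \<in> E"

definition reach :: "'a set set \<Rightarrow> 'a set \<Rightarrow> 'a \<Rightarrow> 'a \<Rightarrow> bool" where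
  "reach E S = (adj_in E S)\<^sup>*\<^sup>*"

definition connected_graph :: "'a set \<Rightarrow> 'a set set \<Rightarrow> bool" where
  "connected_graph V E \<longleftrightarrow> V \<noteq> {} \<and> (\<forall>x\<in>V. \<forall>y\<in>V. reach E V x y)"

definition complete_graph :: "'a set \<Rightarrow> 'a set set \<Rightarrow> bool" where
  "complete_graph V E \<longleftrightarrow> (\<forall>x\<in>V. \<forall>y\<in>V. x \<noteq> y \<longrightarrow> {x, y} \<in> E)"

definition is_cut :: "'a set \<Rightarrow> 'a set set \<Rightarrow> 'a set \<Rightarrow> bool" where
  "is_cut V E U \<longleftrightarrow> U \<subseteq> V \<and> (\<exists>x\<in>V - U. \<exists>y\<in>V - U. \<not> reach E (V - U) x y)"

text \<open>Vertex connectivity: minimum size of a cut (G non-complete).\<close>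
definition vertex_conn :: "'a set \<Rightarrow> 'a set set \<Rightarrow> nat" where
  "vertex_conn V E = (LEAST k. \<exists>U. is_cut V E U \<and> card U = k)"

definition kappa_cut :: "'a set \<Rightarrow> 'a set set \<Rightarrow> 'a set \<Rightarrow> bool" where
  "kappa_cut V E U \<longleftrightarrow> is_cut V E U \<and> card U = vertex_conn V E"

definition side :: "'a set \<Rightarrow> 'a set set \<Rightarrow> 'a set \<Rightarrow> 'a \<Rightarrow> 'a set" where
  "side V E U x = {y \<in> V - U. reach E (V - U) x y}"

definition disconnects :: "'a set \<Rightarrow> 'a set set \<Rightarrow> 'a set \<Rightarrow> 'a \<Rightarrow> 'a \<Rightarrow> bool" where
  "disconnects V E U u v \<longleftrightarrow> u \<in> V - U \<and> v \<in> V - U \<and> side V E U u \<noteq> side V E U v"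

text \<open>Local connectivity kappa(u,v): minimum size of a set consisting of vertices
  other than u, v and possibly the edge {u,v}, whose removal disconnects u from v.\<close>
definition local_conn :: "'a set \<Rightarrow> 'a set set \<Rightarrow> 'a \<Rightarrow> 'a \<Rightarrow> nat" where
  "local_conn V E u v = (LEAST k. \<exists>X b. X \<subseteq> V - {u, v} \<and>
      (b \<longrightarrow> {u, v} \<in> E) \<and> k = card X + (if b then 1 else 0) \<and>
      \<not> reach (if b then E - {{u, v}} else E) (V - X) u v)"

definition is_small :: "'a set \<Rightarrow> 'a set set \<Rightarrow> nat \<Rightarrow> 'a \<Rightarrow> 'a set \<Rightarrow> bool" where
  "is_small V E t x Y \<longleftrightarrow> kappa_cut V E Y \<and> x \<notin> Y \<and> card (side V E Y x) \<le> t \<and>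
     (\<forall>U. kappa_cut V E U \<and> x \<notin> U \<and> card (side V E U x) \<le> t \<longrightarrow> side V E Y x \<subseteq> side V E U x)"

end

theory Submission
  imports Defs
begin


lemma reach_closed:
  assumes "reach E S x y" "x \<in> A" "\<And>a b. a \<in> A \<Longrightarrow> b \<in> S \<Longrightarrow> {a,b} \<in> E \<Longrightarrow> b \<in> A"
  shows "y \<in> A"
  using assms(1) unfolding reach_def
  by (induction rule: rtranclp_induct) (auto simp: adj_in_def assms(2,3))

lemma reach_sym: "reach E S x y \<Longrightarrow> reach E S y x"
  unfolding reach_def
proof (induction rule: rtranclp_induct)
  case base then show ?case by simp
next
  case (step y z)
  then have "adj_in E S z y" by (auto simp: adj_in_def insert_commute)
  then show ?case using step.IH by (rule converse_rtranclp_into_rtranclp)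
qed

lemma reach_trans: "reach E S x y \<Longrightarrow> reach E S y z \<Longrightarrow> reach E S x z"
  unfolding reach_def by (rule rtranclp_trans)

lemma reach_edge: "x \<in> S \<Longrightarrow> y \<in> S \<Longrightarrow> {x,y} \<in> E \<Longrightarrow> reach E S x y"
  by (simp add: reach_def adj_in_def r_into_rtranclp)

lemma reach_mono: "reach E S x y \<Longrightarrow> E \<subseteq> E' \<Longrightarrow> S \<subseteq> S' \<Longrightarrow> reach E' S' x y"
  unfolding reach_def
proof (induction rule: rtranclp_induct)
  case base then show ?case by simp
next
  case (step y z)
  then have "adj_in E' S' y z" by (auto simp: adj_in_def)
  then show ?case using step by (meson rtranclp.rtrancl_into_rtrancl)
qed

lemma edge_in_V: "simple_graph V E \<Longrightarrow> {a,b} \<in> E \<Longrightarrow> a \<in> V \<and> b \<in> V"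
proof -
  assume G: "simple_graph V E" and e: "{a,b} \<in> E"
  then obtain x y where xy: "{a,b} = {x,y}" "x \<in> V" "y \<in> V"
    unfolding simple_graph_def by blast
  have "a \<in> {x,y}" "b \<in> {x,y}" using xy(1) by (simp_all add: xy(1)[symmetric])
  then show "a \<in> V \<and> b \<in> V" using xy(2,3) by blast
qed

lemma side_sub: "side V E U x \<subseteq> V - U"
  by (auto simp: side_def)

lemma side_self: "x \<in> V - U \<Longrightarrow> x \<in> side V E U x"
  by (auto simp: side_def reach_def)

lemma side_closed:
  assumes "simple_graph V E" "a \<in> side V E U x" "{a,b} \<in> E" "b \<notin> U"
  shows "b \<in> side V E U x"
proof -
  have bV: "b \<in> V" using edge_in_V[OF assms(1,3)] by simp
  have ab: "reach E (V - U) a b" using assms bV by (intro reach_edge) (auto simp: side_def)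
  have xa: "reach E (V - U) x a" using assms(2) by (simp add: side_def)
  have "reach E (V - U) x b" by (rule reach_trans[OF xa ab])
  then show ?thesis using bV assms(4) by (simp add: side_def)
qed

lemma side_nbr:
  assumes "simple_graph V E" "a \<in> side V E U x" "{a,b} \<in> E"
  shows "b \<in> side V E U x \<union> U"
  using side_closed[OF assms] by blast

lemma cut_ge: "is_cut V E U \<Longrightarrow> vertex_conn V E \<le> card U"
  unfolding vertex_conn_def by (rule Least_le) auto

lemma not_reach_pair:
  assumes "{u,v} \<notin> E" "u \<noteq> v"
  shows "\<not> reach E {u,v} u v"
proof
  assume "reach E {u,v} u v"
  then have "v \<in> {u}" by (rule reach_closed) (use assms in auto)
  then show False using assms by auto
qed



lemma small_exists:
  assumes G: "simple_graph V E" and k1: "1 \<le> vertex_conn V E"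
    and nk: "4 * vertex_conn V E < card V"
    and U: "kappa_cut V E U" "x \<notin> U" "x \<in> V" "card (side V E U x) \<le> t"
    and t: "t = (card V - vertex_conn V E + 1) div 2"
  shows "\<exists>Y. is_small V E t x Y"
proof -
  define \<kappa> where "\<kappa> = vertex_conn V E"
  define n where "n = card V"
  have finV: "finite V" using G by (simp add: simple_graph_def)
  define F where "F = (\<lambda>Y. kappa_cut V E Y \<and> x \<notin> Y \<and> card (side V E Y x) \<le> t)"
  have "F U" using U by (simp add: F_def)
  then obtain Y where FY: "F Y" and min: "\<And>Z. F Z \<Longrightarrow> card (side V E Y x) \<le> card (side V E Z x)"
    using ex_has_least_nat[of F U "\<lambda>Y. card (side V E Y x)"] by blast
  have "side V E Y x \<subseteq> side V E U' x" if FU': "F U'" for U'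
  proof (rule ccontr)
    assume nsub: "\<not> side V E Y x \<subseteq> side V E U' x"
    define S where "S = side V E Y x"
    define S' where "S' = side V E U' x"
    define T where "T = V - Y - S"
    define T' where "T' = V - U' - S'"
    define C1 where "C1 = (S \<inter> U') \<union> (Y \<inter> U') \<union> (Y \<inter> S')"
    have YV: "Y \<subseteq> V" and cY: "card Y = \<kappa>" and xY: "x \<notin> Y" and cS: "card S \<le> t"
      using FY by (auto simp: F_def kappa_cut_def is_cut_def \<kappa>_def S_def)
    have U'V: "U' \<subseteq> V" and cU': "card U' = \<kappa>" and xU': "x \<notin> U'" and cS': "card S' \<le> t"
      using FU' by (auto simp: F_def kappa_cut_def is_cut_def \<kappa>_def S'_def)
    have SY: "S \<subseteq> V - Y" and S'U': "S' \<subseteq> V - U'" unfolding S_def S'_def by (rule side_sub)+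
    have xS: "x \<in> S" and xS': "x \<in> S'" unfolding S_def S'_def using xY xU' U(3)
      by (auto intro: side_self)
    have finS: "finite S" "finite S'" using SY S'U' finV by (auto intro: finite_subset)
    have finY: "finite Y" "finite U'" using YV U'V finV by (auto intro: finite_subset)
    have cVY: "card (V - Y) = n - \<kappa>" using card_Diff_subset[OF finY(1) YV] cY n_def by simp
    have nk': "n - \<kappa> \<ge> 4" using nk k1 unfolding n_def \<kappa>_def by linarith
    have t2: "2 * t \<le> n - \<kappa> + 1" using t unfolding n_def \<kappa>_def by linarith
    have tlt: "t < n - \<kappa>" using t2 nk' by linarith
    have closP: "b \<in> S \<inter> S'" if "a \<in> S \<inter> S'" "b \<in> V - C1" "{a,b} \<in> E" for a b
    proof -
      have "b \<in> S \<union> Y" using side_nbr[OF G _ that(3), of Y x] that(1) S_def by blast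
      moreover have "b \<in> S' \<union> U'" using side_nbr[OF G _ that(3), of U' x] that(1) S'_def by blast
      ultimately show ?thesis using that(2) unfolding C1_def by blast
    qed
    have sideC1: "side V E C1 x \<subseteq> S \<inter> S'"
    proof
      fix y assume "y \<in> side V E C1 x"
      then have "reach E (V - C1) x y" by (simp add: side_def)
      from reach_closed[where A="S \<inter> S'", OF this] xS xS' closP show "y \<in> S \<inter> S'" by blast
    qed
    have "card T = card (V - Y) - card S" unfolding T_def
      using card_Diff_subset[OF finS(1) SY] by (simp add: Diff_Diff_Int)
    then have "card T > 0" using cVY cS tlt by linarith
    then obtain z where zT: "z \<in> T" by (metis card_gt_0_iff ex_in_conv)
    have C1V: "C1 \<subseteq> V" using YV U'V unfolding C1_def by blast
    have xC1': "x \<in> V - C1" using U(3) xY xU' unfolding C1_def by blast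
    have zC1: "z \<in> V - C1" using zT unfolding T_def C1_def by blast
    have nrC1: "\<not> reach E (V - C1) x z"
    proof
      assume "reach E (V - C1) x z"
      then have "z \<in> side V E C1 x" using zC1 by (simp add: side_def)
      then show False using sideC1 zT unfolding T_def by blast
    qed
    have cutC1: "is_cut V E C1" unfolding is_cut_def using C1V xC1' zC1 nrC1 by blast
    have finC1: "finite C1" using C1V finV by (rule finite_subset)
    have geC1: "\<kappa> \<le> card C1" using cut_ge[OF cutC1] \<kappa>_def by simp
    have leC1: "card C1 \<le> \<kappa>"
    proof (cases "T \<inter> T' = {}")
      case False
      then obtain w where wW: "w \<in> T \<inter> T'" by blast
      define C2 where "C2 = (T \<inter> U') \<union> (Y \<inter> U') \<union> (Y \<inter> T')"
      have C2V: "C2 \<subseteq> V" using YV U'V unfolding C2_def by blast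
      have closW: "b \<in> T \<inter> T'" if "a \<in> T \<inter> T'" "b \<in> V - C2" "{a,b} \<in> E" for a b
      proof -
        have ab: "{b,a} \<in> E" using that(3) by (simp add: insert_commute)
        have "b \<notin> S"
        proof
          assume "b \<in> S"
          then have "a \<in> S" using side_closed[OF G _ ab, of Y x] that(1) S_def T_def by blast
          then show False using that(1) T_def by blast
        qed
        moreover have "b \<notin> S'"
        proof
          assume "b \<in> S'"
          then have "a \<in> S'" using side_closed[OF G _ ab, of U' x] that(1) S'_def T'_def by blast
          then show False using that(1) T'_def by blast
        qed
        ultimately show ?thesis using that(2) unfolding T_def T'_def C2_def by blast
      qed
      have wC2: "w \<in> V - C2" using wW unfolding C2_def T_def T'_def by blast
      have xC2: "x \<in> V - C2" using U(3) xY xS unfolding C2_def T_def by blast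
      have nrC2: "\<not> reach E (V - C2) w x"
      proof
        assume "reach E (V - C2) w x"
        from reach_closed[where A="T \<inter> T'", OF this] wW closW have "x \<in> T \<inter> T'" by blast
        then show False using xS T_def by blast
      qed
      have cutC2: "is_cut V E C2" unfolding is_cut_def using C2V wC2 xC2 nrC2 by blast
      have geC2: "\<kappa> \<le> card C2" using cut_ge[OF cutC2] \<kappa>_def by simp
      have finC2: "finite C2" using C2V finV by (rule finite_subset)
      have un: "C1 \<union> C2 = Y \<union> U'" using SY S'U' YV U'V unfolding C1_def C2_def T_def T'_def by blast
      have it: "C1 \<inter> C2 = Y \<inter> U'" using SY S'U' unfolding C1_def C2_def T_def T'_def by blast
      have "card C1 + card C2 = card Y + card U'"
        using card_Un_Int[OF finC1 finC2] card_Un_Int[OF finY] un it by simp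
      then show ?thesis using geC2 cY cU' by linarith
    next
      case True
      define D where "D = (Y \<union> U') - (S \<union> S')"
      have finD: "finite D" using finY unfolding D_def by simp
      have un: "D \<union> C1 = Y \<union> U'" using SY S'U' unfolding D_def C1_def by blast
      have it: "D \<inter> C1 = Y \<inter> U'" using SY S'U' unfolding D_def C1_def by blast
      have e1: "card D + card C1 = card Y + card U'"
        using card_Un_Int[OF finD finC1] card_Un_Int[OF finY] un it by simp
      have Vd: "V = (S \<union> S') \<union> D" using True SY S'U' YV U'V unfolding D_def T_def T'_def by blast
      have dj: "(S \<union> S') \<inter> D = {}" unfolding D_def by blast
      have e2: "n = card (S \<union> S') + card D"
        unfolding n_def using Vd dj card_Un_disjoint[of "S \<union> S'" D] finS finD by simp
      have e3: "card (S \<union> S') + card (S \<inter> S') = card S + card S'"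
        using card_Un_Int[OF finS] by simp
      have "card (S \<inter> S') \<ge> 1" using xS xS' finS
        by (metis IntI card_0_eq finite_Int empty_iff less_one not_le)
      then show ?thesis using e1 e2 e3 cS cS' t2 cY cU' nk' by linarith
    qed
    have kC1: "kappa_cut V E C1" using cutC1 geC1 leC1 \<kappa>_def by (simp add: kappa_cut_def)
    have xC1: "x \<notin> C1" unfolding C1_def using xY xU' by blast
    have psub: "side V E C1 x \<subset> S" using sideC1 nsub S_def S'_def by blast
    have lt: "card (side V E C1 x) < card S" using psubset_card_mono[OF finS(1) psub] .
    then have "F C1" using kC1 xC1 cS by (simp add: F_def)
    from min[OF this] lt show False using S_def by simp
  qed
  then show ?thesis using FY unfolding is_small_def F_def by blast
qed



lemma conn_pos:
  assumes G: "simple_graph V E" and C: "connected_graph V E" and NC: "\<not> complete_graph V E"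
  shows "1 \<le> vertex_conn V E"
proof -
  obtain x y where xy: "x \<in> V" "y \<in> V" "x \<noteq> y" "{x,y} \<notin> E"
    using NC unfolding complete_graph_def by blast
  have "V - (V - {x,y}) = {x,y}" using xy by blast
  then have "is_cut V E (V - {x,y})" unfolding is_cut_def
    using not_reach_pair[OF xy(4,3)] xy by auto
  then have "\<exists>k U. is_cut V E U \<and> card U = k" by blast
  then obtain U where U: "is_cut V E U" "card U = vertex_conn V E"
    unfolding vertex_conn_def using LeastI_ex[of "\<lambda>k. \<exists>U. is_cut V E U \<and> card U = k"] by blast
  have finV: "finite V" using G by (simp add: simple_graph_def)
  show ?thesis
  proof (rule ccontr)
    assume "\<not> 1 \<le> vertex_conn V E"
    then have "card U = 0" using U by simp
    moreover have "finite U" using U finV unfolding is_cut_def by (auto intro: finite_subset)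
    ultimately have "U = {}" by simp
    then show False using U(1) C unfolding is_cut_def connected_graph_def by auto
  qed
qed

lemma nonedge_case:
  assumes G: "simple_graph V E" and k1: "1 \<le> vertex_conn V E"
    and nk: "4 * vertex_conn V E < card V"
    and t: "t = (card V - vertex_conn V E + 1) div 2"
    and X: "X \<subseteq> V" "card X = vertex_conn V E" "u \<in> V - X" "v \<in> V - X"
    and nr: "\<not> reach E (V - X) u v" and cA: "card (side V E X u) \<le> t"
  shows "\<exists>Y. is_small V E t u Y \<and> disconnects V E Y u v"
proof -
  have finV: "finite V" using G by (simp add: simple_graph_def)
  have "kappa_cut V E X" unfolding kappa_cut_def is_cut_def using X nr by blast
  then obtain Y where Y: "is_small V E t u Y"
    using small_exists[OF G k1 nk _ _ _ cA t] X by blast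
  have sub: "side V E Y u \<subseteq> side V E X u"
    using Y \<open>kappa_cut V E X\<close> X cA unfolding is_small_def by blast
  have vX: "v \<notin> side V E X u" using nr by (simp add: side_def)
  have uY: "u \<notin> Y" and kY: "kappa_cut V E Y" using Y by (auto simp: is_small_def)
  have YV: "Y \<subseteq> V" using kY by (simp add: kappa_cut_def is_cut_def)
  have vY: "v \<notin> Y"
  proof
    assume vY: "v \<in> Y"
    define Y' where "Y' = Y - {v}"
    have clos: "b \<in> side V E Y u" if "a \<in> side V E Y u" "b \<in> V - Y'" "{a,b} \<in> E" for a b
    proof (cases "b = v")
      case True
      have "a \<in> side V E X u" using that(1) sub by blast
      then have "v \<in> side V E X u" using side_closed[OF G _ that(3)] True X(4) by blast
      then show ?thesis using vX by blast
    next
      case False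
      then show ?thesis using side_closed[OF G that(1,3)] that(2) Y'_def by blast
    qed
    have nr': "\<not> reach E (V - Y') u v"
    proof
      assume "reach E (V - Y') u v"
      from reach_closed[where A="side V E Y u", OF this] clos side_self[of u V Y E] X uY
      have "v \<in> side V E Y u" by blast
      then show False using vY side_sub[of V E Y u] by blast
    qed
    have "is_cut V E Y'" unfolding is_cut_def using nr' YV X uY Y'_def by blast
    then have "vertex_conn V E \<le> card Y'" by (rule cut_ge)
    moreover have "card Y' = card Y - 1" using vY Y'_def by simp
    moreover have "card Y = vertex_conn V E" using kY by (simp add: kappa_cut_def)
    ultimately show False using k1 by linarith
  qed
  have "v \<in> side V E Y v" using vY X by (intro side_self) blast
  moreover have "v \<notin> side V E Y u" using vX sub by blast
  ultimately have "disconnects V E Y u v" unfolding disconnects_def using uY vY X by blast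
  then show ?thesis using Y by blast
qed

lemma edge_case:
  assumes G: "simple_graph V E" and k1: "1 \<le> vertex_conn V E"
    and nk: "4 * vertex_conn V E < card V"
    and t: "t = (card V - vertex_conn V E + 1) div 2"
    and e: "{u,v} \<in> E" and X: "X \<subseteq> V - {u,v}" "card X + 1 = vertex_conn V E"
    and uv: "u \<in> V" "v \<in> V" "u \<noteq> v"
    and nr: "\<not> reach (E - {{u,v}}) (V - X) u v"
    and cA: "card {w \<in> V - X. reach (E - {{u,v}}) (V - X) u w} \<le> t"
  shows "\<exists>Y. is_small V E t u Y \<and> v \<in> Y \<and> \<not> reach (E - {{u,v}}) (V - (Y - {v})) u v"
proof -
  define A where "A = {w \<in> V - X. reach (E - {{u,v}}) (V - X) u w}"
  define X' where "X' = insert v X"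
  have finV: "finite V" using G by (simp add: simple_graph_def)
  have finX: "finite X" using X finV by (auto intro: finite_subset)
  have vA: "v \<notin> A" using nr A_def by simp
  have uA: "u \<in> A" using uv X unfolding A_def reach_def by auto
  have closA: "b \<in> A" if "a \<in> A" "b \<in> V - X'" "{a,b} \<in> E" for a b
  proof -
    have "{a,b} \<noteq> {u,v}"
    proof
      assume "{a,b} = {u,v}"
      then have "a = v" using that(2) X'_def by (auto simp: doubleton_eq_iff)
      then show False using that(1) vA by simp
    qed
    then have ab: "reach (E - {{u,v}}) (V - X) a b"
      using that A_def X'_def by (intro reach_edge) auto
    have ua: "reach (E - {{u,v}}) (V - X) u a" using that(1) A_def by simp
    have "reach (E - {{u,v}}) (V - X) u b" by (rule reach_trans[OF ua ab])
    then show ?thesis using that(2) A_def X'_def by simp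
  qed
  have sideX': "side V E X' u \<subseteq> A"
  proof
    fix y assume "y \<in> side V E X' u"
    then have "reach E (V - X') u y" by (simp add: side_def)
    from reach_closed[where A=A, OF this] uA closA show "y \<in> A" by blast
  qed
  have AVX: "A \<subseteq> V - X" unfolding A_def by blast
  have finA: "finite A" using AVX finV by (auto intro: finite_subset)
  have cVX: "card (V - X) = card V - card X" using card_Diff_subset[OF finX] X by auto
  have "card (V - X - A) = card (V - X) - card A" using card_Diff_subset[OF finA AVX] .
  moreover have "card V - vertex_conn V E \<ge> 4" using nk k1 by linarith
  ultimately have "card (V - X - A) \<ge> 2" using cVX cA[folded A_def] t X(2) by linarith
  moreover have "v \<in> V - X - A" using vA uv X by blast
  ultimately have "card (V - X - A - {v}) \<ge> 1" by simp
  then obtain y where y: "y \<in> V - X - A - {v}" by (metis card_0_eq empty_iff finite_Diff finV not_one_le_zero ex_in_conv)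
  have "\<not> reach E (V - X') u y"
  proof
    assume "reach E (V - X') u y"
    from reach_closed[where A=A, OF this] uA closA have "y \<in> A" by blast
    then show False using y by blast
  qed
  then have cutX': "is_cut V E X'" unfolding is_cut_def X'_def using X uv y by blast
  have "v \<notin> X" using X(1) by blast
  then have "card X' = vertex_conn V E" using X finX unfolding X'_def by simp
  then have kX': "kappa_cut V E X'" using cutX' by (simp add: kappa_cut_def)
  have uX': "u \<notin> X'" using X uv X'_def by blast
  have cX': "card (side V E X' u) \<le> t" using card_mono[OF finA sideX'] cA A_def by simp
  obtain Y where Y: "is_small V E t u Y"
    using small_exists[OF G k1 nk kX' uX' uv(1) cX' t] by blast
  have sub: "side V E Y u \<subseteq> A" using Y kX' uX' cX' sideX' unfolding is_small_def by blast
  have uY: "u \<notin> Y" using Y by (simp add: is_small_def)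
  have uS: "u \<in> side V E Y u" using uY uv by (intro side_self) blast
  have vY: "v \<in> Y"
  proof (rule ccontr)
    assume "v \<notin> Y"
    then have "v \<in> side V E Y u" using side_closed[OF G uS e] by blast
    then show False using sub vA by blast
  qed
  have clos: "b \<in> side V E Y u" if "a \<in> side V E Y u" "b \<in> V - (Y - {v})" "{a,b} \<in> E - {{u,v}}" for a b
  proof (cases "b \<in> Y")
    case True
    then have bv: "b = v" using that(2) by blast
    have "a \<in> A" using that(1) sub by blast
    then have ua: "reach (E - {{u,v}}) (V - X) u a" and aVX: "a \<in> V - X" unfolding A_def by auto
    have av: "reach (E - {{u,v}}) (V - X) a v"
      using that(3) bv aVX uv X by (intro reach_edge) auto
    have False using nr reach_trans[OF ua av] by simp
    then show ?thesis ..
  next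
    case False
    then show ?thesis using side_closed[OF G that(1)] that(3) by blast
  qed
  have "\<not> reach (E - {{u,v}}) (V - (Y - {v})) u v"
  proof
    assume "reach (E - {{u,v}}) (V - (Y - {v})) u v"
    from reach_closed[where A="side V E Y u", OF this] uS clos have "v \<in> side V E Y u" by blast
    then show False using vY side_sub[of V E Y u] by blast
  qed
  then show ?thesis using Y vY by blast
qed

theorem lemma7:
  fixes V :: "'a set" and E :: "'a set set" and u v :: 'a
  assumes "simple_graph V E" and "connected_graph V E" and "\<not> complete_graph V E"
    and "4 * vertex_conn V E < card V"
    and "u \<in> V" and "v \<in> V" and "u \<noteq> v"
    and "local_conn V E u v = vertex_conn V E"
  shows "({u, v} \<notin> E \<longrightarrow>
           (\<exists>Y. is_small V E ((card V - vertex_conn V E + 1) div 2) u Y \<and> disconnects V E Y u v) \<or>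
           (\<exists>Y. is_small V E ((card V - vertex_conn V E + 1) div 2) v Y \<and> disconnects V E Y u v))
       \<and> ({u, v} \<in> E \<longrightarrow>
           (\<exists>Y. is_small V E ((card V - vertex_conn V E + 1) div 2) u Y \<and> v \<in> Y \<and>
                \<not> reach (E - {{u, v}}) (V - (Y - {v})) u v) \<or>
           (\<exists>Y. is_small V E ((card V - vertex_conn V E + 1) div 2) v Y \<and> u \<in> Y \<and>
                \<not> reach (E - {{u, v}}) (V - (Y - {u})) v u))"
proof -
  note G = assms(1) and nk = assms(4) and uv = assms(5,6,7)
  define t where "t = (card V - vertex_conn V E + 1) div 2"
  have k1: "1 \<le> vertex_conn V E" using conn_pos assms(1,2,3) .
  have finV: "finite V" using G by (simp add: simple_graph_def)
  define P where "P = (\<lambda>k. \<exists>X b. X \<subseteq> V - {u, v} \<and>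
      (b \<longrightarrow> {u, v} \<in> E) \<and> k = card X + (if b then 1 else 0) \<and>
      \<not> reach (if b then E - {{u, v}} else E) (V - X) u v)"
  have VV: "V - (V - {u,v}) = {u,v}" using uv by blast
  have "P (card (V - {u,v}) + (if {u,v} \<in> E then 1 else 0))"
  proof (cases "{u,v} \<in> E")
    case True
    have "\<not> reach (E - {{u,v}}) {u,v} u v" using not_reach_pair[of u v "E - {{u,v}}"] uv by simp
    then show ?thesis unfolding P_def using True VV by (intro exI[of _ "V - {u,v}"] exI[of _ True]) auto
  next
    case False
    have "\<not> reach E {u,v} u v" using not_reach_pair[of u v E] uv False by simp
    then show ?thesis unfolding P_def using False VV by (intro exI[of _ "V - {u,v}"] exI[of _ False]) auto
  qed
  then have "P (Least P)" by (rule LeastI)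
  moreover have "Least P = vertex_conn V E" using assms(8) unfolding local_conn_def P_def by simp
  ultimately have "P (vertex_conn V E)" by simp
  then obtain X b where Xb: "X \<subseteq> V - {u, v}" "b \<longrightarrow> {u, v} \<in> E"
    "vertex_conn V E = card X + (if b then 1 else 0)"
    "\<not> reach (if b then E - {{u, v}} else E) (V - X) u v" unfolding P_def by blast
  have finX: "finite X" using Xb(1) finV by (auto intro: finite_subset)
  have cVX: "card (V - X) = card V - card X" using card_Diff_subset[OF finX] Xb(1) by auto
  have XV: "X \<subseteq> V" using Xb(1) by blast
  have uvX: "u \<in> V - X" "v \<in> V - X" using Xb(1) uv by auto
  have part1: "{u, v} \<notin> E \<longrightarrow>
           (\<exists>Y. is_small V E t u Y \<and> disconnects V E Y u v) \<or>
           (\<exists>Y. is_small V E t v Y \<and> disconnects V E Y u v)"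
  proof
    assume ne: "{u,v} \<notin> E"
    then have nb: "\<not> b" using Xb(2) by blast
    then have cX: "card X = vertex_conn V E" and nr: "\<not> reach E (V - X) u v" using Xb by auto
    have disj: "side V E X u \<inter> side V E X v = {}"
    proof (rule ccontr)
      assume "side V E X u \<inter> side V E X v \<noteq> {}"
      then obtain w where w1: "reach E (V - X) u w" and w2: "reach E (V - X) v w" by (auto simp: side_def)
      have "reach E (V - X) u v" by (rule reach_trans[OF w1 reach_sym[OF w2]])
      then show False using nr by simp
    qed
    have ss: "side V E X u \<subseteq> V - X" "side V E X v \<subseteq> V - X" by (rule side_sub)+
    have fs: "finite (side V E X u)" "finite (side V E X v)" using ss finV by (auto intro: finite_subset)
    have "card (side V E X u \<union> side V E X v) \<le> card (V - X)"
      using ss finV by (intro card_mono) auto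
    then have "card (side V E X u) + card (side V E X v) \<le> card V - vertex_conn V E"
      using card_Un_disjoint[OF fs disj] cVX cX by linarith
    then have "card (side V E X u) \<le> t \<or> card (side V E X v) \<le> t" unfolding t_def by linarith
    then show "(\<exists>Y. is_small V E t u Y \<and> disconnects V E Y u v) \<or>
           (\<exists>Y. is_small V E t v Y \<and> disconnects V E Y u v)"
    proof
      assume "card (side V E X u) \<le> t"
      then show ?thesis using nonedge_case[OF G k1 nk t_def XV cX uvX nr] by blast
    next
      assume c: "card (side V E X v) \<le> t"
      have nr': "\<not> reach E (V - X) v u"
      proof
        assume "reach E (V - X) v u"
        then show False using nr reach_sym[of E "V - X" v u] by simp
      qed
      obtain Y where "is_small V E t v Y" "disconnects V E Y v u"
        using nonedge_case[OF G k1 nk t_def XV cX uvX(2,1) nr' c] by blast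
      then have "disconnects V E Y u v" unfolding disconnects_def by auto
      then show ?thesis using \<open>is_small V E t v Y\<close> by blast
    qed
  qed
  have part2: "{u, v} \<in> E \<longrightarrow>
           (\<exists>Y. is_small V E t u Y \<and> v \<in> Y \<and> \<not> reach (E - {{u, v}}) (V - (Y - {v})) u v) \<or>
           (\<exists>Y. is_small V E t v Y \<and> u \<in> Y \<and> \<not> reach (E - {{u, v}}) (V - (Y - {u})) v u)"
  proof
    assume e: "{u,v} \<in> E"
    have b: b
    proof (rule ccontr)
      assume "\<not> b"
      then have "\<not> reach E (V - X) u v" using Xb by auto
      then show False using reach_edge[OF uvX e] by simp
    qed
    then have cX: "card X + 1 = vertex_conn V E" and nr: "\<not> reach (E - {{u,v}}) (V - X) u v"
      using Xb by auto
    define E' where "E' = E - {{u,v}}"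
    define Au where "Au = {w \<in> V - X. reach E' (V - X) u w}"
    define Av where "Av = {w \<in> V - X. reach E' (V - X) v w}"
    have disj: "Au \<inter> Av = {}"
    proof (rule ccontr)
      assume "Au \<inter> Av \<noteq> {}"
      then obtain w where w1: "reach E' (V - X) u w" and w2: "reach E' (V - X) v w" by (auto simp: Au_def Av_def)
      have "reach E' (V - X) u v" by (rule reach_trans[OF w1 reach_sym[OF w2]])
      then show False using nr E'_def by simp
    qed
    have sub: "Au \<union> Av \<subseteq> V - X" unfolding Au_def Av_def by blast
    have fin: "finite Au" "finite Av" using sub finV by (auto intro: finite_subset)
    have "card (Au \<union> Av) \<le> card (V - X)" using sub finV by (intro card_mono) auto
    then have "card Au + card Av \<le> card V - vertex_conn V E + 1"
      using card_Un_disjoint[OF fin disj] cVX cX nk by linarith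
    then have "card Au \<le> t \<or> card Av \<le> t" unfolding t_def by linarith
    then show "(\<exists>Y. is_small V E t u Y \<and> v \<in> Y \<and> \<not> reach (E - {{u, v}}) (V - (Y - {v})) u v) \<or>
           (\<exists>Y. is_small V E t v Y \<and> u \<in> Y \<and> \<not> reach (E - {{u, v}}) (V - (Y - {u})) v u)"
    proof
      assume "card Au \<le> t"
      then have "card {w \<in> V - X. reach (E - {{u,v}}) (V - X) u w} \<le> t" using Au_def E'_def by simp
      from edge_case[OF G k1 nk t_def e Xb(1) cX uv nr this] show ?thesis by blast
    next
      assume c: "card Av \<le> t"
      have com: "{v,u} = {u,v}" by (rule insert_commute)
      have e': "{v,u} \<in> E" using e com by simp
      have X': "X \<subseteq> V - {v,u}" using Xb(1) com by simp
      have nr': "\<not> reach (E - {{v,u}}) (V - X) v u"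
      proof
        assume "reach (E - {{v,u}}) (V - X) v u"
        then have "reach (E - {{u,v}}) (V - X) v u" using com by simp
        then show False using nr reach_sym[of "E - {{u,v}}" "V - X" v u] by simp
      qed
      have c': "card {w \<in> V - X. reach (E - {{v,u}}) (V - X) v w} \<le> t"
        using c com Av_def E'_def by simp
      obtain Y where Y: "is_small V E t v Y" "u \<in> Y" "\<not> reach (E - {{v,u}}) (V - (Y - {u})) v u"
        using edge_case[OF G k1 nk t_def e' X' cX uv(2,1) not_sym[OF uv(3)] nr' c'] by blast
      have "\<not> reach (E - {{u,v}}) (V - (Y - {u})) v u" using Y(3) com by simp
      then show ?thesis using Y(1,2) by blast
    qed
  qed
  show ?thesis using part1 part2 unfolding t_def by blast
qed


end
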